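(* Let $\mathfrak A$ be the real algebra of generalized transformations equipped with the involution $\mathcal A\mapsto\mathcal A'$ (a generalized adjoint), and let $\varphi=\Phi|_1$ be the local state of a symmetric faithful state $\Phi$ which is also preparationally faithful. Define $\langle\mathcal A|\mathcal B\rangle_\varphi=\varphi(\mathcal A'\circ\mathcal B)$, $\|\mathcal A\|_\varphi=\sqrt{\langle\mathcal A|\mathcal A\rangle_\varphi}$, and the left ideal $\mathfrak I=\{\mathcal X\in\mathfrak A:\varphi(\mathcal X'\circ\mathcal X)=0\}$. Let $\mathcal A,\mathcal B\in\mathfrak A$ be bounded, i.e. $\|\mathcal A\|,\|\mathcal A'\|,\|\mathcal B\|,\|\mathcal B'\|<\infty$ where $\|\mathcal C\|=\sup_{\omega\in\mathfrak S}|\omega(\mathcal C)|$. Then $\mathcal A-\mathcal B\in\mathfrak I$ (i.e. $\mathcal A$ and $\mathcal B$ lie in the same class of $\mathfrak A/\mathfrak I$) if and only if $\mathcal A$ and $\mathcal B$ are informationally equivalent, i.e. $\omega(\mathcal A)=\omega(\mathcal B)$ for all $\omega\in\mathfrak S$.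
   Context: States $\omega\in\mathfrak S$ extend linearly to $\mathfrak A$. A generalized adjoint on $\mathfrak A$ satisfies $(\mathcal A+\mathcal B)'=\mathcal A'+\mathcal B'$, $(\mathcal A')'=\mathcal A$, $(\mathcal A\circ\mathcal B)'=\mathcal B'\circ\mathcal A'$, and $\mathcal A'\circ\mathcal A=0\Rightarrow\mathcal A=0$. $\varphi$ is a state and a real positive form: $\varphi(\mathcal A')=\varphi(\mathcal A)$ and $\varphi(\mathcal A'\circ\mathcal A)\ge0$ for all $\mathcal A\in\mathfrak A$; moreover $\|\mathcal C\circ\mathcal D\|\le\|\mathcal C\|\|\mathcal D\|$. Preparational faithfulness is used in the form: for every $\omega\in\mathfrak S$ there is a transformation $\mathcal T_\omega$ with $\varphi(\mathcal T_\omega)\ne0$ such that $\omega(\mathcal A)=\varphi(\mathcal A\circ\mathcal T_\omega')/\varphi(\mathcal T_\omega)=\langle\mathcal A'|\tilde{\mathcal T}_\omega\rangle_\varphi$ for all $\mathcal A$, where $\tilde{\mathcal T}_\omega=\mathcal T_\omega'/\varphi(\mathcal T_\omega)$. *)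

theory Defs
  imports "HOL-Analysis.Analysis"
begin

text \<open>Abstract setting: the real algebra of generalized transformations is modelled
  by a type of class real_algebra; composition is the ring multiplication (*).
  States are real-valued functions on the algebra (their linear extensions).\<close>

definition gen_adjoint :: "('a::real_algebra \<Rightarrow> 'a) \<Rightarrow> bool" where
  "gen_adjoint adj \<longleftrightarrow>
     (\<forall>A B. adj (A + B) = adj A + adj B) \<and>
     (\<forall>A. adj (adj A) = A) \<and>
     (\<forall>A B. adj (A * B) = adj B * adj A) \<and>
     (\<forall>A. adj A * A = 0 \<longrightarrow> A = 0)"

definition st_norm :: "('a \<Rightarrow> real) set \<Rightarrow> 'a \<Rightarrow> ereal" where
  "st_norm S C = (SUP \<omega>\<in>S. ereal \<bar>\<omega> C\<bar>)"

definition inner_phi :: "('a::real_algebra \<Rightarrow> real) \<Rightarrow> ('a \<Rightarrow> 'a) \<Rightarrow> 'a \<Rightarrow> 'a \<Rightarrow> real" where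
  "inner_phi \<phi> adj A B = \<phi> (adj A * B)"

definition norm_phi :: "('a::real_algebra \<Rightarrow> real) \<Rightarrow> ('a \<Rightarrow> 'a) \<Rightarrow> 'a \<Rightarrow> real" where
  "norm_phi \<phi> adj A = sqrt (inner_phi \<phi> adj A A)"

definition ideal_I :: "('a::real_algebra \<Rightarrow> real) \<Rightarrow> ('a \<Rightarrow> 'a) \<Rightarrow> 'a set" where
  "ideal_I \<phi> adj = {X. \<phi> (adj X * X) = 0}"

end

theory Submission
  imports Defs
begin

lemma adj_zero:
  assumes "gen_adjoint adj" shows "adj 0 = (0::'a::real_algebra)"
proof -
  have "adj (0 + 0) = adj 0 + adj 0" using assms unfolding gen_adjoint_def by blast
  then show ?thesis by simp
qed

lemma adj_minus:
  assumes "gen_adjoint adj" shows "adj (- x) = - adj (x::'a::real_algebra)"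
proof -
  have "adj (x + - x) = adj x + adj (- x)" using assms unfolding gen_adjoint_def by blast
  then have "0 = adj x + adj (- x)" using adj_zero[OF assms] by simp
  then show ?thesis by (simp add: eq_neg_iff_add_eq_0 add.commute)
qed

lemma adj_scale_nat:
  assumes "gen_adjoint adj" shows "adj (scaleR (real n) x) = scaleR (real n) (adj (x::'a::real_algebra))"
proof (induction n)
  case 0 then show ?case using adj_zero[OF assms] by simp
next
  case (Suc n)
  have "scaleR (real (Suc n)) x = x + scaleR (real n) x" by (simp add: scaleR_left_distrib)
  then have "adj (scaleR (real (Suc n)) x) = adj x + adj (scaleR (real n) x)"
    using assms unfolding gen_adjoint_def by simp
  also have "\<dots> = scaleR (real (Suc n)) (adj x)" using Suc by (simp add: scaleR_left_distrib)
  finally show ?case .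
qed

lemma cs_zero:
  fixes adj :: "'a::real_algebra \<Rightarrow> 'a" and \<phi> :: "'a \<Rightarrow> real"
  assumes adjoint: "gen_adjoint adj" and lin: "linear \<phi>"
    and phi_real: "\<forall>X. \<phi> (adj X) = \<phi> X"
    and phi_pos: "\<forall>X. \<phi> (adj X * X) \<ge> 0"
    and z: "\<phi> (adj X * X) = 0"
  shows "\<phi> (adj X * V) = 0"
proof -
  have add: "\<And>a b. adj (a + b) = adj a + adj b" and inv: "\<And>a. adj (adj a) = a"
    and mul: "\<And>a b. adj (a * b) = adj b * adj a"
    using adjoint unfolding gen_adjoint_def by blast+
  define b where "b = \<phi> (adj X * V)"
  define c where "c = \<phi> (adj V * V)"
  have sym: "\<phi> (adj V * X) = b"
    using phi_real[rule_format, of "adj X * V"] by (simp add: mul inv b_def)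
  have ineq: "0 \<le> 2 * real n * b + c \<and> 0 \<le> c - 2 * real n * b" for n :: nat
  proof -
    let ?Y = "scaleR (real n) X"
    have e1: "adj (?Y + V) * (?Y + V) = scaleR (real n * real n) (adj X * X)
       + scaleR (real n) (adj X * V) + scaleR (real n) (adj V * X) + adj V * V"
      by (simp add: add adj_scale_nat[OF adjoint] algebra_simps)
    have e2: "adj (?Y + - V) * (?Y + - V) = scaleR (real n * real n) (adj X * X)
       - scaleR (real n) (adj X * V) - scaleR (real n) (adj V * X) + adj V * V"
    proof -
      have a2: "adj (?Y + - V) = scaleR (real n) (adj X) + - adj V"
        by (simp only: add adj_minus[OF adjoint] adj_scale_nat[OF adjoint])
      show ?thesis unfolding a2 by (simp add: algebra_simps)
    qed
    have p1: "0 \<le> \<phi> (adj (?Y + V) * (?Y + V))" using phi_pos by blast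
    have p2: "0 \<le> \<phi> (adj (?Y + - V) * (?Y + - V))" using phi_pos by blast
    have "\<phi> (adj (?Y + V) * (?Y + V)) = 2 * real n * b + c"
      unfolding e1 using z sym
      by (simp add: linear_add[OF lin] linear_scale[OF lin] b_def c_def)
    moreover have "\<phi> (adj (?Y + - V) * (?Y + - V)) = c - 2 * real n * b"
      unfolding e2 using z sym
      by (simp add: linear_add[OF lin] linear_diff[OF lin] linear_scale[OF lin] b_def c_def)
    ultimately show ?thesis using p1 p2 by simp
  qed
  show ?thesis
  proof (rule ccontr)
    assume "\<phi> (adj X * V) \<noteq> 0"
    then have bn: "b \<noteq> 0" by (simp add: b_def)
    obtain n :: nat where n: "c / (2 * \<bar>b\<bar>) < real n" using reals_Archimedean2 by blast
    have "c < 2 * \<bar>b\<bar> * real n" using n bn by (simp add: field_simps)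
    moreover have "0 \<le> 2 * real n * b + c" "0 \<le> c - 2 * real n * b" using ineq by auto
    ultimately show False by (cases "b \<ge> 0") (auto simp: abs_if algebra_simps)
  qed
qed

lemma st_norm_ge:
  assumes "\<omega> \<in> S" shows "ereal \<bar>\<omega> C\<bar> \<le> st_norm S C"
  unfolding st_norm_def using assms by (rule SUP_upper)

lemma st_norm_zero:
  assumes "S \<noteq> {}" "\<forall>\<omega>\<in>S. \<omega> C = 0" shows "st_norm S C = 0"
proof -
  have "(\<lambda>\<omega>. ereal \<bar>\<omega> C\<bar>) ` S = {0}" using assms by auto
  then show ?thesis unfolding st_norm_def by simp
qed

lemma st_norm_le0:
  assumes "\<omega> \<in> S" "st_norm S C \<le> 0" shows "\<omega> C = 0"
proof -
  have "ereal \<bar>\<omega> C\<bar> \<le> 0" using st_norm_ge[OF assms(1), of C] assms(2) by (rule order_trans)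
  then show ?thesis by simp
qed

theorem mainTheorem9:
  fixes S :: "('a::real_algebra \<Rightarrow> real) set"
    and adj :: "'a \<Rightarrow> 'a"
    and \<phi> :: "'a \<Rightarrow> real"
    and A B :: 'a
  assumes adjoint: "gen_adjoint adj"
    and states_linear: "\<forall>\<omega>\<in>S. linear \<omega>"
    and phi_state: "\<phi> \<in> S"
    and phi_real: "\<forall>X. \<phi> (adj X) = \<phi> X"
    and phi_pos: "\<forall>X. \<phi> (adj X * X) \<ge> 0"
    and submult: "\<forall>C D. st_norm S (C * D) \<le> st_norm S C * st_norm S D"
    and prep_faithful: "\<forall>\<omega>\<in>S. \<exists>T. \<phi> T \<noteq> 0 \<and>
           (\<forall>X. \<omega> X = \<phi> (X * adj T) / \<phi> T \<and>
                \<omega> X = inner_phi \<phi> adj (adj X) (scaleR (1 / \<phi> T) (adj T)))"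
    and bdA: "st_norm S A < \<infinity>" "st_norm S (adj A) < \<infinity>"
    and bdB: "st_norm S B < \<infinity>" "st_norm S (adj B) < \<infinity>"
  shows "A - B \<in> ideal_I \<phi> adj \<longleftrightarrow> (\<forall>\<omega>\<in>S. \<omega> A = \<omega> B)"
proof -
  have inv: "\<And>a. adj (adj a) = a" using adjoint unfolding gen_adjoint_def by blast
  have lin: "linear \<phi>" using states_linear phi_state by blast
  have Sne: "S \<noteq> {}" using phi_state by blast
  define X where "X = A - B"
  have kill: "\<forall>\<omega>\<in>S. \<omega> Y = 0" if "\<forall>V. \<phi> (Y * V) = 0" for Y
  proof
    fix \<omega> assume "\<omega> \<in> S"
    then obtain T where "\<forall>X. \<omega> X = \<phi> (X * adj T) / \<phi> T" using prep_faithful by blast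
    then show "\<omega> Y = 0" using that by simp
  qed
  have ideal: "\<phi> (C * Y) = 0" if "\<forall>\<omega>\<in>S. \<omega> Y = 0" for C Y
  proof -
    have "st_norm S Y = 0" using st_norm_zero[OF Sne that] .
    then have "st_norm S (C * Y) \<le> 0" using submult[rule_format, of C Y] by simp
    then show ?thesis using st_norm_le0[OF phi_state] by blast
  qed
  have "X \<in> ideal_I \<phi> adj \<longleftrightarrow> (\<forall>\<omega>\<in>S. \<omega> X = 0)"
  proof
    assume "X \<in> ideal_I \<phi> adj"
    then have z: "\<phi> (adj X * X) = 0" unfolding ideal_I_def by simp
    have "\<forall>V. \<phi> (adj X * V) = 0"
      using cs_zero[OF adjoint lin phi_real phi_pos z] by blast
    then have "\<forall>\<omega>\<in>S. \<omega> (adj X) = 0" using kill by blast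
    then have z2: "\<phi> (adj (adj X) * adj X) = 0" using ideal[of "adj X" X] by (simp add: inv)
    have "\<forall>V. \<phi> (X * V) = 0"
      using cs_zero[OF adjoint lin phi_real phi_pos z2] by (simp add: inv)
    then show "\<forall>\<omega>\<in>S. \<omega> X = 0" using kill by blast
  next
    assume "\<forall>\<omega>\<in>S. \<omega> X = 0"
    then show "X \<in> ideal_I \<phi> adj" using ideal unfolding ideal_I_def by blast
  qed
  moreover have "(\<forall>\<omega>\<in>S. \<omega> X = 0) \<longleftrightarrow> (\<forall>\<omega>\<in>S. \<omega> A = \<omega> B)"
    using states_linear by (auto simp: X_def linear_diff)
  ultimately show ?thesis by (simp add: X_def)
qed

end
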